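(* In the setting in the context, let $$U(D)=\exp\left\{-\frac{\lambda S}{N}\left(1+\frac{\mu}{B\mu-\mu}e^{-B\mu D}-\frac{B\mu}{B\mu-\mu}e^{-\mu D}\right)\right\}$$ be the upper bound on the deadline violation probability under the BETA policy. In the short deadline regime $D\to 0$ (i.e. $\mu D\to 0$ and $B\mu D\to 0$), $U(D)=\exp\{-\frac{\lambda S}{2N}B\mu^2D^2+o(D^2)\}$, so the task computation time lower bound $t_{\mathrm D}$ follows the Rayleigh distribution $$\Pr\{t_{\mathrm D}<D\}=1-e^{-\frac{\lambda S}{2N}B\mu^2D^2},$$ the deadline violation probability upper bound is $1-\Pr\{t_{\mathrm D}<D\}$ for deadline $D$, and the mean computation delay is $\mathbb E[t_{\mathrm D}]=\sqrt{\frac{N\pi}{2\lambda B S\mu^2}}$.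
   Context: Model. Roads of total length $S$ carry vehicles with density $\lambda$; the number of vehicles is Poisson with mean $\lambda S$. There are $B\neq 1$ RSUs. Each vehicle meets any given RSU after an exponential time of rate $\mu$, independently and memorylessly. A task-RSU holds $N$ tasks with common deadline $D$; at each vehicle meeting with the task-RSU an unfinished task is replicated on that vehicle, and a replica's output is returned when the carrying vehicle next meets any of the $B$ RSUs; a task is finished when one replica returns. Tasks are assigned by the BETA policy (always replicate an unfinished task with the fewest replicas). It has been established that under this policy the deadline violation probability is at most $U(D)$. *)

theory Defs
  imports "HOL-Analysis.Analysis" "HOL-Library.Landau_Symbols"
begin

text \<open>Upper bound U(D) on the deadline violation probability under BETA,
  with parameters lam (vehicle density), S (road length), N (tasks),
  B (number of RSUs), mu (meeting rate).\<close>
definition U_bound :: "real \<Rightarrow> real \<Rightarrow> nat \<Rightarrow> nat \<Rightarrow> real \<Rightarrow> real \<Rightarrow> real" where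
  "U_bound lam S N B mu D =
     exp (- (lam * S / real N) *
          (1 + mu / (real B * mu - mu) * exp (- real B * mu * D)
             - real B * mu / (real B * mu - mu) * exp (- mu * D)))"

definition tD_cdf :: "real \<Rightarrow> real \<Rightarrow> nat \<Rightarrow> nat \<Rightarrow> real \<Rightarrow> real \<Rightarrow> real" where
  "tD_cdf lam S N B mu D =
     (if D \<le> 0 then 0 else 1 - exp (- (lam * S / (2 * real N)) * real B * mu\<^sup>2 * D\<^sup>2))"

definition tD_pdf :: "real \<Rightarrow> real \<Rightarrow> nat \<Rightarrow> nat \<Rightarrow> real \<Rightarrow> real \<Rightarrow> real" where
  "tD_pdf lam S N B mu D =
     (if D \<le> 0 then 0 else
        2 * (lam * S / (2 * real N)) * real B * mu\<^sup>2 * D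
          * exp (- (lam * S / (2 * real N)) * real B * mu\<^sup>2 * D\<^sup>2))"

end

theory Submission
  imports Defs "HOL-Real_Asymp.Real_Asymp" "HOL-Probability.Probability"
begin

lemma psi_smallo: "(\<lambda>D::real. exp (-D) - 1 + D - D^2/2) \<in> o[at 0](\<lambda>D. D^2)"
  by real_asymp

lemma phi_smallo: fixes a :: real assumes "a \<noteq> 0"
  shows "(\<lambda>D::real. exp (-(a*D)) - 1 + a*D - (a*D)^2/2) \<in> o[at 0](\<lambda>D. D^2)"
proof -
  have fl: "filterlim (\<lambda>D::real. a*D) (at 0) (at 0)"
  proof (rule filterlim_atI)
    show "((*) a \<longlongrightarrow> 0) (at 0)" by (auto intro!: tendsto_eq_intros)
    show "\<forall>\<^sub>F x in at 0. a * x \<noteq> 0" using assms by (auto simp: eventually_at_filter)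
  qed
  have "(\<lambda>D::real. exp (-(a*D)) - 1 + a*D - (a*D)^2/2) \<in> o[at 0](\<lambda>D. (a*D)^2)"
    using landau_o.small.compose[OF psi_smallo fl] by simp
  then show ?thesis using assms by (simp add: power_mult_distrib)
qed

lemma gauss2:
  fixes k :: real assumes k: "k > 0"
  shows "((\<lambda>x. if x \<in> {0..} then 2 * (exp (- ((k*x)^2)) * (k*x)^2) else 0) has_integral (sqrt pi / (2*k))) UNIV"
proof -
  have h0: "has_bochner_integral lborel (\<lambda>x::real. indicator {0..} x *\<^sub>R (exp (-x\<^sup>2)*x^2)) (sqrt pi / 4)"
    using gaussian_moment_even_pos[of 1] by simp
  have h1: "has_bochner_integral lborel (\<lambda>x::real. indicator {0..} (0 + k*x) *\<^sub>R (exp (-(0+k*x)\<^sup>2)*(0+k*x)^2)) ((sqrt pi / 4) /\<^sub>R \<bar>k\<bar>)"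
    using lborel_has_bochner_integral_real_affine_iff[of k _ "sqrt pi / 4" 0] h0 k by simp
  have ind: "indicator {0..} (k*x) = (indicator {0..} x :: real)" for x
    using k by (auto simp: indicator_def zero_le_mult_iff)
  have h2: "has_bochner_integral lborel (\<lambda>x::real. 2 * (indicator {0..} x * (exp (-(k*x)\<^sup>2)*(k*x)^2))) (sqrt pi / (2*k))"
  proof -
    have "has_bochner_integral lborel (\<lambda>x::real. 2 * (indicator {0..} x * (exp (-(k*x)\<^sup>2)*(k*x)^2))) (2 * ((sqrt pi / 4) /\<^sub>R \<bar>k\<bar>))"
      using has_bochner_integral_mult_right[OF h1, of 2] k by (simp add: ind)
    moreover have "2 * ((sqrt pi / 4) /\<^sub>R \<bar>k\<bar>) = sqrt pi / (2*k)" using k by (simp add: field_simps)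
    ultimately show ?thesis by (simp only:)
  qed
  have int: "integrable lborel (\<lambda>x::real. 2 * (indicator {0..} x * (exp (-(k*x)\<^sup>2)*(k*x)^2)))"
    using h2 by (auto simp: has_bochner_integral_iff)
  have eq: "integral\<^sup>L lborel (\<lambda>x::real. 2 * (indicator {0..} x * (exp (-(k*x)\<^sup>2)*(k*x)^2))) = sqrt pi / (2*k)"
    using has_bochner_integral_integral_eq[OF h2] .
  have fun_eq: "(\<lambda>x::real. 2 * (indicator {0..} x * (exp (-(k*x)\<^sup>2)*(k*x)^2))) =
     (\<lambda>x. if x \<in> {0..} then 2 * (exp (- ((k*x)^2)) * (k*x)^2) else 0)"
    by (auto simp: indicator_def fun_eq_iff)
  show ?thesis using has_integral_integral_lborel[OF int] unfolding eq unfolding fun_eq .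
qed

lemma ring_aux: fixes c P d Q :: real shows "c*((P + d) - d*Q) = c*P + c*d - c*d*Q"
  by (simp add: algebra_simps)

lemma alg_id:
  fixes K a b X Y D :: real assumes "a - b \<noteq> 0"
  shows "-K*(1 + b/(a-b)*X - a/(a-b)*Y) = -(K*a*b/2)*D^2
     + (-K/(a-b))*(b*(X-1+a*D-(a*D)^2/2) - a*(Y-1+b*D-(b*D)^2/2))"
proof -
  have e1: "b*(X-1+a*D-(a*D)^2/2) - a*(Y-1+b*D-(b*D)^2/2) = (b*X - a*Y + (a-b)) - (a-b)*(a*b*D^2/2)"
    by (simp add: field_simps power2_eq_square)
  have e2: "(-K/(a-b))*((b*X - a*Y + (a-b)) - (a-b)*(a*b*D^2/2)) = -K*(1 + b/(a-b)*X - a/(a-b)*Y) + K*a*b/2*D^2"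
  proof -
    have "(-K/(a-b))*((b*X - a*Y + (a-b)) - (a-b)*(a*b*D^2/2)) = (-K/(a-b))*(b*X - a*Y) + (-K/(a-b))*(a-b) - (-K/(a-b))*(a-b)*(a*b*D^2/2)"
      using ring_aux[of "-K/(a-b)" "b*X - a*Y" "a-b" "a*b*D^2/2"] .
    also have "(-K/(a-b))*(a-b) = -K" using assms by simp
    also have "(-K/(a-b))*(b*X - a*Y) = -K*(b/(a-b)*X - a/(a-b)*Y)"
      by (simp add: algebra_simps diff_divide_distrib)
    finally show ?thesis by (simp add: algebra_simps)
  qed
  show ?thesis unfolding e1 e2 by simp
qed

theorem corollary1:
  fixes lam S mu :: real and N B :: nat
  assumes "lam > 0" and "S > 0" and "mu > 0" and "N > 0" and "B > 0" and "B \<noteq> 1"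
  shows "(\<exists>g. g \<in> o[at 0](\<lambda>D. D\<^sup>2) \<and>
           (\<forall>D. U_bound lam S N B mu D
                 = exp (- (lam * S / (2 * real N)) * real B * mu\<^sup>2 * D\<^sup>2 + g D))) \<and>
         (\<forall>D>0. 1 - tD_cdf lam S N B mu D
                 = exp (- (lam * S / (2 * real N)) * real B * mu\<^sup>2 * D\<^sup>2)) \<and>
         (\<forall>D>0. (tD_cdf lam S N B mu has_real_derivative tD_pdf lam S N B mu D) (at D)) \<and>
         (((\<lambda>D. D * tD_pdf lam S N B mu D) has_integral
           sqrt (real N * pi / (2 * lam * real B * S * mu\<^sup>2))) {0..})"
proof (intro conjI)
  define c where "c = (lam * S / (2 * real N)) * real B * mu\<^sup>2"
  have cpos: "c > 0" using assms by (simp add: c_def)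
  define a where "a = real B * mu"
  define K where "K = lam * S / real N"
  have ab: "a - mu \<noteq> 0" using assms by (simp add: a_def)
  have a0: "a \<noteq> 0" using assms by (simp add: a_def)
  define phi where "phi = (\<lambda>x D::real. exp (-(x*D)) - 1 + x*D - (x*D)^2/2)"
  define g where "g = (\<lambda>D. -K/(a-mu) * (mu * phi a D - a * phi mu D))"
  show "\<exists>g. g \<in> o[at 0](\<lambda>D. D\<^sup>2) \<and>
           (\<forall>D. U_bound lam S N B mu D
                 = exp (- (lam * S / (2 * real N)) * real B * mu\<^sup>2 * D\<^sup>2 + g D))"
  proof (intro exI conjI allI)
    have "(\<lambda>D. mu * phi a D - a * phi mu D) \<in> o[at 0](\<lambda>D. D\<^sup>2)"
      using phi_smallo[OF a0] phi_smallo[of mu] assms(3)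
      by (intro sum_in_smallo) (auto simp: phi_def)
    then show "g \<in> o[at 0](\<lambda>D. D\<^sup>2)"
      using cmult_in_smallo_iff[of "-K/(a-mu)" "\<lambda>D. mu * phi a D - a * phi mu D"] unfolding g_def by blast
  next
    fix D
    have "- K * (1 + mu / (a - mu) * exp (- a * D) - a / (a - mu) * exp (- mu * D))
        = - c * D\<^sup>2 + g D"
      using alg_id[OF ab, of K "exp (- a * D)" "exp (- mu * D)" D]
      unfolding g_def phi_def c_def K_def a_def by (simp add: power2_eq_square)
    then show "U_bound lam S N B mu D
                 = exp (- (lam * S / (2 * real N)) * real B * mu\<^sup>2 * D\<^sup>2 + g D)"
      unfolding U_bound_def a_def K_def c_def by (simp add: mult.assoc)
  qed
  show "\<forall>D>0. 1 - tD_cdf lam S N B mu D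
                 = exp (- (lam * S / (2 * real N)) * real B * mu\<^sup>2 * D\<^sup>2)"
    by (simp add: tD_cdf_def)
  show "\<forall>D>0. (tD_cdf lam S N B mu has_real_derivative tD_pdf lam S N B mu D) (at D)"
  proof (intro allI impI)
    fix D :: real assume D: "D > 0"
    have d: "((\<lambda>x. 1 - exp (- (lam * S / (2 * real N)) * real B * mu\<^sup>2 * x\<^sup>2)) has_real_derivative
            tD_pdf lam S N B mu D) (at D)"
      using D assms by (auto simp: tD_pdf_def intro!: derivative_eq_intros)
    show "(tD_cdf lam S N B mu has_real_derivative tD_pdf lam S N B mu D) (at D)"
    proof (rule has_field_derivative_transform_within_open[OF d, of "{0<..}"])
      note assms
      show "\<And>x. x \<in> {0<..} \<Longrightarrow> 1 - exp (- (lam * S / (2 * real N)) * real B * mu\<^sup>2 * x\<^sup>2) = tD_cdf lam S N B mu x"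
        by (auto simp: tD_cdf_def)
    qed (use D in auto)
  qed
  show "((\<lambda>D. D * tD_pdf lam S N B mu D) has_integral
           sqrt (real N * pi / (2 * lam * real B * S * mu\<^sup>2))) {0..}"
  proof -
    define k where "k = sqrt c"
    have kpos: "k > 0" using cpos by (simp add: k_def)
    have kk: "k^2 = c" using cpos by (simp add: k_def)
    have G: "((\<lambda>x. if x \<in> {0..} then 2 * (exp (- ((k*x)^2)) * (k*x)^2) else 0) has_integral (sqrt pi / (2*k))) UNIV"
      by (rule gauss2[OF kpos])
    have feq: "(\<lambda>x. if x \<in> {0..} then 2 * (exp (- ((k*x)^2)) * (k*x)^2) else 0) =
               (\<lambda>x. if x \<in> {0..} then x * tD_pdf lam S N B mu x else 0)"
    proof
      fix x :: real
      show "(if x \<in> {0..} then 2 * (exp (- ((k*x)^2)) * (k*x)^2) else 0) =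
            (if x \<in> {0..} then x * tD_pdf lam S N B mu x else 0)"
      proof (cases "x > 0")
        case True
        have "(k*x)^2 = c * x^2" using kk by (simp add: power_mult_distrib)
        then show ?thesis using True unfolding tD_pdf_def c_def
          by (simp add: power2_eq_square algebra_simps)
      next
        case False then show ?thesis by (auto simp: tD_pdf_def)
      qed
    qed
    have val: "sqrt pi / (2*k) = sqrt (real N * pi / (2 * lam * real B * S * mu\<^sup>2))"
    proof -
      have "sqrt pi / (2*k) = sqrt (pi / (4*c))"
        using cpos by (simp add: k_def real_sqrt_divide real_sqrt_mult)
      also have "pi / (4*c) = real N * pi / (2 * lam * real B * S * mu\<^sup>2)"
        using assms unfolding c_def by (simp add: field_simps)
      finally show ?thesis .
    qed
    show ?thesis using G unfolding feq val has_integral_restrict_UNIV .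
  qed
qed

end
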